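(* Let $\mathbb{C}$ be a local category. Define a relation on objects by $A\le B$ if and only if $\mathsf{L}A=\mathsf{L}B$ and there exists a morphism $m:A\to B$ with $m\eta_B=\eta_A$. Then: $A\le A$ for every object $A$; $A\le B$ and $B\le C$ imply $A\le C$; and $A\le B$ and $B\le A$ imply $A\cong B$.
   Context: Composition is diagrammatic. A local category is a category $\mathbb{C}$ with, for each object $M$, an object $\mathsf{L}M$ and a morphism $\eta_M:M\to\mathsf{L}M$ such that (L.1) $\mathsf{L}\mathsf{L}M=\mathsf{L}M$ and $\eta_{\mathsf{L}M}=\mathrm{id}_{\mathsf{L}M}$; (L.2) each $\eta_M$ is monic; (L.3) for every $M$ and every $f:N\to\mathsf{L}M$ a pullback of $\eta_M$ along $f$ exists, with leg $m:P\to N$, such that $\mathsf{L}P=\mathsf{L}N$ and $m\eta_N=\eta_P$. *)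

theory Defs
  imports Main
begin

text \<open>A (possibly large) category presented by objects, arrows, domain, codomain,
  identities and diagrammatic composition: comp f g means "first f, then g".\<close>

record ('o, 'm) category_data =
  Ob   :: "'o set"
  Ar   :: "'m set"
  dom  :: "'m \<Rightarrow> 'o"
  cod  :: "'m \<Rightarrow> 'o"
  comp :: "'m \<Rightarrow> 'm \<Rightarrow> 'm"
  idt  :: "'o \<Rightarrow> 'm"

definition hom :: "('o, 'm) category_data \<Rightarrow> 'o \<Rightarrow> 'o \<Rightarrow> 'm set" where
  "hom X A B = {f \<in> Ar X. dom X f = A \<and> cod X f = B}"

definition category :: "('o, 'm) category_data \<Rightarrow> bool" where
  "category X \<longleftrightarrow>
     (\<forall>f \<in> Ar X. dom X f \<in> Ob X \<and> cod X f \<in> Ob X) \<and>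
     (\<forall>A \<in> Ob X. idt X A \<in> hom X A A) \<and>
     (\<forall>f \<in> Ar X. \<forall>g \<in> Ar X. cod X f = dom X g \<longrightarrow>
        comp X f g \<in> hom X (dom X f) (cod X g)) \<and>
     (\<forall>f \<in> Ar X. comp X (idt X (dom X f)) f = f \<and> comp X f (idt X (cod X f)) = f) \<and>
     (\<forall>f \<in> Ar X. \<forall>g \<in> Ar X. \<forall>h \<in> Ar X. cod X f = dom X g \<longrightarrow> cod X g = dom X h \<longrightarrow>
        comp X (comp X f g) h = comp X f (comp X g h))"

definition monic :: "('o, 'm) category_data \<Rightarrow> 'm \<Rightarrow> bool" where
  "monic X f \<longleftrightarrow> f \<in> Ar X \<and>
     (\<forall>g \<in> Ar X. \<forall>h \<in> Ar X. cod X g = dom X f \<longrightarrow> cod X h = dom X f \<longrightarrow>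
        dom X g = dom X h \<longrightarrow> comp X g f = comp X h f \<longrightarrow> g = h)"

definition is_pullback ::
  "('o, 'm) category_data \<Rightarrow> 'm \<Rightarrow> 'm \<Rightarrow> 'o \<Rightarrow> 'm \<Rightarrow> 'm \<Rightarrow> bool" where
  "is_pullback X f g P m n \<longleftrightarrow>
     P \<in> Ob X \<and> m \<in> hom X P (dom X f) \<and> n \<in> hom X P (dom X g) \<and>
     comp X m f = comp X n g \<and>
     (\<forall>Q \<in> Ob X. \<forall>a \<in> hom X Q (dom X f). \<forall>b \<in> hom X Q (dom X g).
        comp X a f = comp X b g \<longrightarrow>
        (\<exists>!u. u \<in> hom X Q P \<and> comp X u m = a \<and> comp X u n = b))"

definition local_category ::
  "('o, 'm) category_data \<Rightarrow> ('o \<Rightarrow> 'o) \<Rightarrow> ('o \<Rightarrow> 'm) \<Rightarrow> bool" where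
  "local_category X L \<eta> \<longleftrightarrow>
     category X \<and>
     (\<forall>M \<in> Ob X. L M \<in> Ob X \<and> \<eta> M \<in> hom X M (L M)) \<and>
     (\<forall>M \<in> Ob X. L (L M) = L M \<and> \<eta> (L M) = idt X (L M)) \<and>
     (\<forall>M \<in> Ob X. monic X (\<eta> M)) \<and>
     (\<forall>M \<in> Ob X. \<forall>N \<in> Ob X. \<forall>f \<in> hom X N (L M).
        \<exists>P m n. is_pullback X f (\<eta> M) P m n \<and> L P = L N \<and> comp X m (\<eta> N) = \<eta> P)"

definition iso_objs :: "('o, 'm) category_data \<Rightarrow> 'o \<Rightarrow> 'o \<Rightarrow> bool" where
  "iso_objs X A B \<longleftrightarrow> (\<exists>f \<in> hom X A B. \<exists>g \<in> hom X B A.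
     comp X f g = idt X A \<and> comp X g f = idt X B)"

definition loc_le ::
  "('o, 'm) category_data \<Rightarrow> ('o \<Rightarrow> 'o) \<Rightarrow> ('o \<Rightarrow> 'm) \<Rightarrow> 'o \<Rightarrow> 'o \<Rightarrow> bool" where
  "loc_le X L \<eta> A B \<longleftrightarrow> L A = L B \<and> (\<exists>m \<in> hom X A B. comp X m (\<eta> B) = \<eta> A)"

end

theory Submission
  imports Defs
begin

theorem proposition5p6:
  fixes X :: "('o, 'm) category_data" and L :: "'o \<Rightarrow> 'o" and \<eta> :: "'o \<Rightarrow> 'm"
  assumes "local_category X L \<eta>"
  shows "(\<forall>A \<in> Ob X. loc_le X L \<eta> A A) \<and>
         (\<forall>A \<in> Ob X. \<forall>B \<in> Ob X. \<forall>C \<in> Ob X.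
            loc_le X L \<eta> A B \<and> loc_le X L \<eta> B C \<longrightarrow> loc_le X L \<eta> A C) \<and>
         (\<forall>A \<in> Ob X. \<forall>B \<in> Ob X.
            loc_le X L \<eta> A B \<and> loc_le X L \<eta> B A \<longrightarrow> iso_objs X A B)"
proof -
  have cat: "category X" using assms unfolding local_category_def by blast
  have eta: "\<And>M. M \<in> Ob X \<Longrightarrow> \<eta> M \<in> hom X M (L M)"
    using assms unfolding local_category_def by blast
  have mon: "\<And>M. M \<in> Ob X \<Longrightarrow> monic X (\<eta> M)"
    using assms unfolding local_category_def by blast
  have idh: "\<And>A. A \<in> Ob X \<Longrightarrow> idt X A \<in> hom X A A" using cat unfolding category_def by blast
  have comph: "\<And>f g A B C. f \<in> hom X A B \<Longrightarrow> g \<in> hom X B C \<Longrightarrow> comp X f g \<in> hom X A C"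
    using cat unfolding category_def hom_def by auto
  have idl: "\<And>f A B. f \<in> hom X A B \<Longrightarrow> comp X (idt X A) f = f"
    using cat unfolding category_def hom_def by auto
  have ass: "\<And>f g h A B C D. f \<in> hom X A B \<Longrightarrow> g \<in> hom X B C \<Longrightarrow> h \<in> hom X C D \<Longrightarrow>
      comp X (comp X f g) h = comp X f (comp X g h)"
    using cat unfolding category_def hom_def by auto
  have P1: "\<forall>A \<in> Ob X. loc_le X L \<eta> A A"
    unfolding loc_le_def using idh idl eta by blast
  have P2: "\<forall>A \<in> Ob X. \<forall>B \<in> Ob X. \<forall>C \<in> Ob X.
            loc_le X L \<eta> A B \<and> loc_le X L \<eta> B C \<longrightarrow> loc_le X L \<eta> A C"
  proof (intro ballI impI)
    fix A B C assume o: "A \<in> Ob X" "B \<in> Ob X" "C \<in> Ob X"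
      and h: "loc_le X L \<eta> A B \<and> loc_le X L \<eta> B C"
    then obtain m n where m: "m \<in> hom X A B" "comp X m (\<eta> B) = \<eta> A"
      and n: "n \<in> hom X B C" "comp X n (\<eta> C) = \<eta> B" and L: "L A = L B" "L B = L C"
      unfolding loc_le_def by blast
    have "comp X (comp X m n) (\<eta> C) = \<eta> A"
      using ass[OF m(1) n(1) eta[OF o(3)]] m n by simp
    then show "loc_le X L \<eta> A C" unfolding loc_le_def using L comph[OF m(1) n(1)] by auto
  qed
  have P3: "\<forall>A \<in> Ob X. \<forall>B \<in> Ob X.
            loc_le X L \<eta> A B \<and> loc_le X L \<eta> B A \<longrightarrow> iso_objs X A B"
  proof (intro ballI impI)
    fix A B assume o: "A \<in> Ob X" "B \<in> Ob X"
      and h: "loc_le X L \<eta> A B \<and> loc_le X L \<eta> B A"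
    then obtain m n where m: "m \<in> hom X A B" "comp X m (\<eta> B) = \<eta> A"
      and n: "n \<in> hom X B A" "comp X n (\<eta> A) = \<eta> B" and L: "L A = L B"
      unfolding loc_le_def by blast
    have e1: "comp X (comp X m n) (\<eta> A) = comp X (idt X A) (\<eta> A)"
      using ass[OF m(1) n(1) eta[OF o(1)]] m n idl[OF eta[OF o(1)]] by simp
    have e2: "comp X (comp X n m) (\<eta> B) = comp X (idt X B) (\<eta> B)"
      using ass[OF n(1) m(1) eta[OF o(2)]] m n idl[OF eta[OF o(2)]] by simp
    have c1: "comp X m n = idt X A"
      using mon[OF o(1)] e1 comph[OF m(1) n(1)] idh[OF o(1)] eta[OF o(1)]
      unfolding monic_def hom_def by auto
    have c2: "comp X n m = idt X B"
      using mon[OF o(2)] e2 comph[OF n(1) m(1)] idh[OF o(2)] eta[OF o(2)]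
      unfolding monic_def hom_def by auto
    show "iso_objs X A B" unfolding iso_objs_def using m n c1 c2 by blast
  qed
  show ?thesis using P1 P2 P3 by blast
qed

end
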